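(* Let $n\geq1$, $\beta>0$, and let $f(\xi)\in\mathbb{Z}_p[\xi_1,\ldots,\xi_n]$ be an elliptic polynomial of degree $d$. Let $A=\{\xi\in\mathbb{Z}_p^n: |\xi_i|_p=1\text{ for some }i\}$ and let $M$ be a positive integer such that $|f(\xi)|_p\geq p^{-M}$ for all $\xi\in A$. Then there is a constant $C>0$ such that for all $x\in\mathbb{Q}_p^n$ and $t>0$ with $p^{(M+1)d\beta}\,t\,\|x\|_p^{-d\beta}\leq 1$, \[ |Z(x,t)|\leq C\,t\,\|x\|_p^{-d\beta-n}. \]
   Context: $\mathbb{Q}_p$ is the field of $p$-adic numbers, $\mathbb{Z}_p$ its ring of integers, $|\cdot|_p$ the $p$-adic absolute value, $\|x\|_p=\max_i|x_i|_p$. $d\xi$ is the Haar measure on $\mathbb{Q}_p^n$ with $\mathbb{Z}_p^n$ of measure $1$. $\Psi$ is the standard additive character of $\mathbb{Q}_p$, $\Psi(a)=\exp(2\pi i\{a\}_p)$ where $\{a\}_p$ is the fractional part of $a$, and $x\cdot\xi=\sum_i x_i\xi_i$. A polynomial $f\in\mathbb{Q}_p[\xi_1,\dots,\xi_n]$ is elliptic of degree $d$ if it is a non-constant homogeneous polynomial of degree $d$ and $f(\xi)=0\iff\xi=0$. $Z(x,t)=\int_{\mathbb{Q}_p^n}\Psi(x\cdot\xi)e^{-t|f(\xi)|_p^{\beta}}\,d\xi$. (The constant $M$ is the one provided for this set $A$ by the paper's lemma guaranteeing a positive lower bound $p^{-M}$ for $|f|_p$ on compact sets avoiding $0$.) 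*)

theory Defs
  imports "HOL-Analysis.Analysis" "HOL-Computational_Algebra.Primes"
begin

text \<open>We model Q_p as an
arbitrary field 'k of characteristic 0 equipped with an absolute value absval that
is non-archimedean, restricts to the p-adic absolute value on the rationals,
is complete, and in which the rationals are dense. These properties characterize
(Q_p, |.|_p) up to isomorphism of valued fields.\<close>

definition is_Qp :: "nat \<Rightarrow> ('k::field_char_0 \<Rightarrow> real) \<Rightarrow> bool" where
  "is_Qp p absval \<longleftrightarrow>
     prime p \<and>
     (\<forall>x. absval x \<ge> 0) \<and>
     (\<forall>x. absval x = 0 \<longleftrightarrow> x = 0) \<and>
     (\<forall>x y. absval (x * y) = absval x * absval y) \<and>
     (\<forall>x y. absval (x + y) \<le> max (absval x) (absval y)) \<and>
     absval (of_nat p) = 1 / real p \<and>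
     (\<forall>m::int. \<not> int p dvd m \<longrightarrow> absval (of_int m) = 1) \<and>
     (\<forall>X::nat \<Rightarrow> 'k.
        (\<forall>e>0. \<exists>N. \<forall>m\<ge>N. \<forall>k\<ge>N. absval (X m - X k) < e) \<longrightarrow>
        (\<exists>L. \<forall>e>0. \<exists>N. \<forall>m\<ge>N. absval (X m - L) < e)) \<and>
     (\<forall>x. \<forall>e>0. \<exists>q::rat. absval (x - of_rat q) < e)"

definition pnorm :: "('k \<Rightarrow> real) \<Rightarrow> ('n::finite \<Rightarrow> 'k) \<Rightarrow> real" where
  "pnorm absval x = Max (range (\<lambda>i. absval (x i)))"

definition pball :: "('k::ab_group_add \<Rightarrow> real) \<Rightarrow> ('n \<Rightarrow> 'k) \<Rightarrow> real \<Rightarrow> ('n \<Rightarrow> 'k) set" where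
  "pball absval a r = {\<xi>. \<forall>i. absval (\<xi> i - a i) \<le> r}"

definition is_padic_haar ::
  "('k::field_char_0 \<Rightarrow> real) \<Rightarrow> ('n::finite \<Rightarrow> 'k) measure \<Rightarrow> bool" where
  "is_padic_haar absval \<mu> \<longleftrightarrow>
     space \<mu> = UNIV \<and>
     sets \<mu> = sigma_sets UNIV {pball absval a r | a r. r > 0} \<and>
     (\<forall>A\<in>sets \<mu>. \<forall>a. emeasure \<mu> ((\<lambda>\<xi>. (\<lambda>i. a i + \<xi> i)) ` A) = emeasure \<mu> A) \<and>
     emeasure \<mu> (pball absval (\<lambda>_. 0) 1) = 1"

definition padic_frac :: "nat \<Rightarrow> ('k::field_char_0 \<Rightarrow> real) \<Rightarrow> 'k \<Rightarrow> rat" where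
  "padic_frac p absval a = (THE r::rat. 0 \<le> r \<and> r < 1 \<and>
      (\<exists>k::nat. r * of_nat p ^ k \<in> \<int>) \<and> absval (a - of_rat r) \<le> 1)"

definition Psi :: "nat \<Rightarrow> ('k::field_char_0 \<Rightarrow> real) \<Rightarrow> 'k \<Rightarrow> complex" where
  "Psi p absval a = exp (2 * complex_of_real pi * \<i> * complex_of_real (real_of_rat (padic_frac p absval a)))"

definition hpoly :: "nat \<Rightarrow> (('n::finite \<Rightarrow> nat) \<Rightarrow> 'k::comm_ring_1) \<Rightarrow> ('n \<Rightarrow> 'k) \<Rightarrow> 'k" where
  "hpoly d c \<xi> = (\<Sum>\<alpha>\<in>{\<alpha>::'n \<Rightarrow> nat. sum \<alpha> UNIV = d}. c \<alpha> * (\<Prod>i\<in>UNIV. \<xi> i ^ \<alpha> i))"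

definition Zkernel ::
  "nat \<Rightarrow> ('k::field_char_0 \<Rightarrow> real) \<Rightarrow> ('n::finite \<Rightarrow> 'k) measure \<Rightarrow> (('n \<Rightarrow> 'k) \<Rightarrow> 'k)
   \<Rightarrow> real \<Rightarrow> ('n \<Rightarrow> 'k) \<Rightarrow> real \<Rightarrow> complex" where
  "Zkernel p absval \<mu> f \<beta> x t =
     (LINT \<xi>|\<mu>. Psi p absval (\<Sum>i\<in>UNIV. x i * \<xi> i) *
                complex_of_real (exp (- t * absval (f \<xi>) powr \<beta>)))"

end

theory Submission
  imports Defs
begin


locale qp =
  fixes p :: nat and absval :: "'k::field_char_0 \<Rightarrow> real"
  assumes Qp: "is_Qp p absval"
begin

lemmas P = Qp[unfolded is_Qp_def]
lemma prime_p: "prime p" using P by (rule conjunct1)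
lemma p_ge2: "p \<ge> 2" using prime_p prime_ge_2_nat by blast
lemma p_pos: "real p > 0" using p_ge2 by simp
lemma av_nonneg[simp]: "absval x \<ge> 0" using P[THEN conjunct2, THEN conjunct1] by auto
lemma av_zero_iff[simp]: "absval x = 0 \<longleftrightarrow> x = 0" using P[THEN conjunct2, THEN conjunct2, THEN conjunct1] by auto
lemma av_mult: "absval (x * y) = absval x * absval y" using P[THEN conjunct2, THEN conjunct2, THEN conjunct2, THEN conjunct1] by auto
lemma av_ultra: "absval (x + y) \<le> max (absval x) (absval y)" using P[THEN conjunct2, THEN conjunct2, THEN conjunct2, THEN conjunct2, THEN conjunct1] by auto
lemma av_p: "absval (of_nat p) = 1 / real p" using P[THEN conjunct2, THEN conjunct2, THEN conjunct2, THEN conjunct2, THEN conjunct2, THEN conjunct1] by auto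
lemma av_unit: "\<not> int p dvd m \<Longrightarrow> absval (of_int m) = 1" using P[THEN conjunct2, THEN conjunct2, THEN conjunct2, THEN conjunct2, THEN conjunct2, THEN conjunct2, THEN conjunct1] by auto
lemma dense: "e > 0 \<Longrightarrow> \<exists>q::rat. absval (x - of_rat q) < e" using P[THEN conjunct2, THEN conjunct2, THEN conjunct2, THEN conjunct2, THEN conjunct2, THEN conjunct2, THEN conjunct2, THEN conjunct2] by auto

lemma av_1[simp]: "absval 1 = 1"
proof -
  have "\<not> int p dvd 1" using p_ge2 by auto
  from av_unit[OF this] show ?thesis by simp
qed

lemma av_0[simp]: "absval 0 = 0" by simp

lemma av_minus[simp]: "absval (- x) = absval x"
proof -
  have "\<not> int p dvd (-1)" using p_ge2 by auto
  from av_unit[OF this] have m1: "absval (-1) = 1" by simp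
  have "absval (-1 * x) = absval (-1) * absval x" by (rule av_mult)
  then show ?thesis using m1 by simp
qed

lemma av_diff_sym: "absval (x - y) = absval (y - x)"
  using av_minus[of "x - y"] by simp

lemma av_inverse: "absval (inverse x) = inverse (absval x)"
proof (cases "x = 0")
  case False
  then have "absval x * absval (inverse x) = 1" by (simp add: av_mult[symmetric])
  from inverse_unique[OF this] show ?thesis by simp
qed simp

lemma av_divide: "absval (x / y) = absval x / absval y"
  by (simp add: divide_inverse av_mult av_inverse)

lemma av_power: "absval (x ^ n) = absval x ^ n"
  by (induction n) (auto simp: av_mult)

lemma av_prod: "absval (prod f S) = (\<Prod>i\<in>S. absval (f i))"
  by (induction S rule: infinite_finite_induct) (auto simp: av_mult)

lemma av_add_le: "absval x \<le> c \<Longrightarrow> absval y \<le> c \<Longrightarrow> absval (x + y) \<le> c"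
  using av_ultra[of x y] by linarith

lemma av_diff_le: "absval x \<le> c \<Longrightarrow> absval y \<le> c \<Longrightarrow> absval (x - y) \<le> c"
  using av_add_le[of x c "-y"] by simp

lemma av_sum_le: "0 \<le> c \<Longrightarrow> (\<And>i. i \<in> S \<Longrightarrow> absval (f i) \<le> c) \<Longrightarrow> absval (sum f S) \<le> c"
  by (induction S rule: infinite_finite_induct) (auto intro!: av_add_le)

lemma av_strict: assumes "absval y < absval x" shows "absval (x + y) = absval x"
proof -
  have "absval (x + y) \<le> absval x" using av_ultra[of x y] assms by linarith
  moreover have "absval x \<le> max (absval (x + y)) (absval (-y))" using av_ultra[of "x+y" "-y"] by simp
  ultimately show ?thesis using assms by auto
qed

lemma av_pp: "absval (of_nat p ^ K) = (1 / real p) ^ K"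
  by (simp add: av_power av_p)

lemma av_int_le1: "absval (of_int m) \<le> 1"
proof (induction "nat \<bar>m\<bar>" arbitrary: m rule: less_induct)
  case less
  show ?case
  proof (cases "int p dvd m")
    case False then show ?thesis using av_unit by simp
  next
    case True
    then obtain m' where m: "m = int p * m'" by blast
    show ?thesis
    proof (cases "m' = 0")
      case True then show ?thesis using m by simp
    next
      case False
      have a: "\<bar>m\<bar> = int p * \<bar>m'\<bar>" using m by (simp add: abs_mult)
      have "2 * \<bar>m'\<bar> \<le> int p * \<bar>m'\<bar>" using p_ge2 by (intro mult_right_mono) auto
      then have "\<bar>m'\<bar> < \<bar>m\<bar>" using a False by linarith
      then have "nat \<bar>m'\<bar> < nat \<bar>m\<bar>" by simp
      then have "absval (of_int m') \<le> 1" using less by blast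
      then have "absval (of_int m') / real p \<le> 1 / real p" using p_pos by (intro divide_right_mono) auto
      also have "1 / real p \<le> 1" using p_ge2 by simp
      also have "absval (of_int m') / real p = absval (of_int m)"
        using m by (simp add: av_mult av_p)
      finally show ?thesis .
    qed
  qed
qed

lemma val_dvd: "absval (of_int m) \<le> (1 / real p) ^ K \<Longrightarrow> int p ^ K dvd m"
proof (induction K arbitrary: m)
  case 0 then show ?case by simp
next
  case (Suc K)
  have "(1 / real p) ^ Suc K < 1" using p_ge2 by (intro power_Suc_less_one) auto
  then have "absval (of_int m) < 1" using Suc.prems by linarith
  then have "int p dvd m" using av_unit by force
  then obtain m' where m: "m = int p * m'" by blast
  have "absval (of_int m) = absval (of_int m') / real p"
    using m by (simp add: av_mult av_p)
  then have "absval (of_int m') = real p * absval (of_int m)" using p_pos by simp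
  also have "\<dots> \<le> real p * (1 / real p) ^ Suc K" using Suc.prems p_pos by (intro mult_left_mono) auto
  also have "\<dots> = (1 / real p) ^ K" using p_pos by simp
  finally have "absval (of_int m') \<le> (1 / real p) ^ K" .
  then have "int p ^ K dvd m'" using Suc.IH by blast
  then show ?case using m by simp
qed

lemma dvd_val: "int p ^ K dvd m \<Longrightarrow> absval (of_int m) \<le> (1 / real p) ^ K"
proof -
  assume "int p ^ K dvd m"
  then obtain m' where "m = int p ^ K * m'" by blast
  then have e: "absval (of_int m) = (1 / real p) ^ K * absval (of_int m')"
    by (simp add: av_mult av_power av_p)
  have "absval (of_int m') \<le> 1" by (rule av_int_le1)
  then have "(1 / real p) ^ K * absval (of_int m') \<le> (1 / real p) ^ K"
    by (rule mult_left_le) simp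
  with e show ?thesis by simp
qed

end



context qp begin

definition isfrac :: "'k \<Rightarrow> rat \<Rightarrow> bool" where
  "isfrac a r \<longleftrightarrow> 0 \<le> r \<and> r < 1 \<and> (\<exists>k::nat. r * of_nat p ^ k \<in> \<int>) \<and> absval (a - of_rat r) \<le> 1"

lemma of_rat_pfrac:
  assumes "r * of_nat p ^ k = of_int m"
  shows "(of_rat r :: 'k) = of_int m / of_nat p ^ k"
proof -
  have "(of_nat p ^ k :: rat) \<noteq> 0" using p_ge2 by simp
  then have "r = of_int m / of_nat p ^ k" using assms by (simp add: field_simps)
  then show ?thesis by (simp add: of_rat_divide of_rat_power)
qed

lemma rat_int:
  assumes "r * of_nat p ^ k \<in> \<int>" "absval (of_rat r :: 'k) \<le> 1"
  shows "r \<in> \<int>"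
proof -
  obtain m where m: "r * of_nat p ^ k = of_int m" using assms(1) by (auto elim: Ints_cases)
  have e: "(of_rat r :: 'k) = of_int m / of_nat p ^ k" by (rule of_rat_pfrac[OF m])
  have pk: "(1 / real p) ^ k > 0" using p_pos by simp
  have "absval (of_rat r :: 'k) = absval (of_int m :: 'k) / (1 / real p) ^ k"
    unfolding e av_divide by (simp add: av_power av_p)
  with assms(2) have "absval (of_int m :: 'k) \<le> (1 / real p) ^ k"
    using pk by (simp add: divide_le_eq)
  then have "int p ^ k dvd m" by (rule val_dvd)
  then obtain j where j: "m = int p ^ k * j" by blast
  have "(of_nat p ^ k :: rat) \<noteq> 0" using p_ge2 by simp
  then have "r = of_int j" using m j p_ge2 by (simp add: field_simps)
  then show ?thesis by simp
qed

lemma frac_unique: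
  assumes "isfrac a r1" "isfrac a r2" shows "r1 = r2"
proof -
  obtain k1 where k1: "r1 * of_nat p ^ k1 \<in> \<int>" using assms(1) unfolding isfrac_def by blast
  obtain k2 where k2: "r2 * of_nat p ^ k2 \<in> \<int>" using assms(2) unfolding isfrac_def by blast
  have i1: "(r1 * of_nat p ^ k1) * of_nat p ^ k2 \<in> \<int>" by (rule Ints_mult[OF k1]) simp
  have i2: "(r2 * of_nat p ^ k2) * of_nat p ^ k1 \<in> \<int>" by (rule Ints_mult[OF k2]) simp
  have "(r1 - r2) * of_nat p ^ (k1 + k2) = (r1 * of_nat p ^ k1) * of_nat p ^ k2 - (r2 * of_nat p ^ k2) * of_nat p ^ k1"
    by (simp add: power_add algebra_simps)
  then have I: "(r1 - r2) * of_nat p ^ (k1 + k2) \<in> \<int>" using i1 i2 by (simp add: Ints_diff)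
  have "absval (of_rat (r1 - r2) :: 'k) = absval ((a - of_rat r2) - (a - of_rat r1))"
    by (simp add: of_rat_diff)
  also have "\<dots> \<le> 1" apply (rule av_diff_le) using assms unfolding isfrac_def by auto
  finally have "r1 - r2 \<in> \<int>" using rat_int[OF I] by blast
  then obtain m where m: "r1 - r2 = of_int m" by (auto elim: Ints_cases)
  have "of_int m < (1::rat)" "of_int m > (-1::rat)" using assms m unfolding isfrac_def by auto
  then have "m = 0" by linarith
  then show ?thesis using m by simp
qed

lemma frac_exists: "\<exists>r. isfrac a r"
proof -
  obtain q where q: "absval (a - of_rat q) < 1" using dense[of 1 a] by auto
  obtain s D where sD: "quotient_of q = (s, D)" by (cases "quotient_of q") auto
  have Dpos: "D > 0" using quotient_of_denom_pos[OF sD] .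
  have qsD: "q = of_int s / of_int D" using quotient_of_div[OF sD] .
  have nu: "\<not> is_unit (int p)" using p_ge2 by auto
  obtain w where w: "D = int p ^ multiplicity (int p) D * w" "\<not> int p dvd w"
    using multiplicity_decompose'[of D "int p"] Dpos nu by auto
  define k where "k = multiplicity (int p) D"
  have Dw: "D = int p ^ k * w" using w(1) k_def by simp
  have primep: "prime (int p)" using prime_p by simp
  have "coprime (int p) w" using primep w(2) by (simp add: prime_imp_coprime)
  then have cop: "coprime w (int p ^ k)" by (simp add: ac_simps)
  obtain u v where uv: "u * w + v * int p ^ k = 1"
    using bezout_int[of w "int p ^ k"] cop by (auto simp: coprime_iff_gcd_eq_1)
  define r0 :: rat where "r0 = of_int (s * u) / of_nat p ^ k"
  define r where "r = r0 - of_int \<lfloor>r0\<rfloor>"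
  have wnz: "w \<noteq> 0" using Dw Dpos by auto
  have pknz: "(of_nat p ^ k :: rat) \<noteq> 0" using p_ge2 by simp
  have "q - r0 = of_int s / (of_nat p ^ k * of_int w) - of_int (s * u) / of_nat p ^ k"
    unfolding qsD r0_def Dw by simp
  also have "\<dots> = of_int s * (1 - of_int u * of_int w) / (of_nat p ^ k * of_int w)"
    using wnz pknz by (simp add: field_simps)
  also have "1 - of_int u * of_int w = (of_int v * of_nat p ^ k :: rat)"
    using arg_cong[OF uv, of "of_int :: int \<Rightarrow> rat"] by (simp add: algebra_simps)
  finally have qr0: "q - r0 = of_int (s * v) / of_int w"
    using wnz pknz p_ge2 by (simp add: field_simps)
  have avw: "absval (of_int w :: 'k) = 1" using av_unit w(2) by simp
  have "absval (of_rat (q - r0) :: 'k) = absval (of_int (s * v) :: 'k)"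
    unfolding qr0 by (simp add: of_rat_divide of_rat_mult av_divide avw)
  then have b1: "absval (of_rat q - of_rat r0 :: 'k) \<le> 1" using av_int_le1[of "s * v"] by (simp add: of_rat_diff)
  have b2: "absval (of_rat (of_int \<lfloor>r0\<rfloor>) :: 'k) \<le> 1" using av_int_le1 by simp
  have "a - of_rat r = (a - of_rat q) + ((of_rat q - of_rat r0) + of_rat (of_int \<lfloor>r0\<rfloor>))"
    unfolding r_def by (simp add: of_rat_diff)
  then have A: "absval (a - of_rat r) \<le> 1"
    using q b1 b2 by (metis av_add_le less_imp_le)
  have "r * of_nat p ^ k = of_int (s * u) - of_int \<lfloor>r0\<rfloor> * of_nat p ^ k"
    unfolding r_def r0_def using pknz p_ge2 by (simp add: field_simps)
  also have "\<dots> \<in> \<int>" by (intro Ints_diff Ints_mult) auto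
  finally have K: "r * of_nat p ^ k \<in> \<int>" .
  have "0 \<le> r" "r < 1" unfolding r_def using floor_correct[of r0] by auto
  then show ?thesis using A K unfolding isfrac_def by blast
qed

lemma padic_frac_eq: "isfrac a r \<Longrightarrow> padic_frac p absval a = r"
  unfolding padic_frac_def
  by (rule the_equality) (auto simp: isfrac_def[symmetric] intro: frac_unique)

definition ex :: "rat \<Rightarrow> complex" where
  "ex r = exp (2 * complex_of_real pi * \<i> * complex_of_real (real_of_rat r))"

lemma Psi_eq: "isfrac a r \<Longrightarrow> Psi p absval a = ex r"
  unfolding Psi_def ex_def by (simp add: padic_frac_eq)

lemma norm_ex: "cmod (ex r) = 1"
proof -
  have "2 * complex_of_real pi * \<i> * complex_of_real (real_of_rat r) = \<i> * complex_of_real (2 * pi * real_of_rat r)"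
    by simp
  then show ?thesis unfolding ex_def by (simp only: norm_exp_i_times)
qed

lemma norm_Psi: "cmod (Psi p absval a) = 1"
  using frac_exists[of a] Psi_eq norm_ex by metis

lemma Psi_shift1: assumes "absval b \<le> 1" shows "Psi p absval (a + b) = Psi p absval a"
proof -
  obtain r where r: "isfrac a r" using frac_exists by blast
  have "a + b - of_rat r = (a - of_rat r) + b" by simp
  then have "isfrac (a + b) r" using r assms unfolding isfrac_def by (metis av_add_le)
  then show ?thesis using Psi_eq r by metis
qed

definition zeta :: complex where "zeta = ex (1 / of_nat p)"

lemma ex_add: "ex (r1 + r2) = ex r1 * ex r2"
  unfolding ex_def by (simp add: of_rat_add distrib_left distrib_right exp_add[symmetric])

lemma ex_1: "ex 1 = 1"
  unfolding ex_def by simp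

lemma zeta_ne1: "zeta \<noteq> 1"
proof
  assume "zeta = 1"
  then have "exp (complex_of_real 0 + \<i> * complex_of_real (2 * pi / real p)) = 1"
    unfolding zeta_def ex_def by (simp add: of_rat_divide mult.commute mult.left_commute)
  then obtain n :: int where n: "2 * pi / real p = of_int (2 * n) * pi"
    unfolding exp_eq_1 by auto
  then have "1 / real p = of_int n" using pi_gt_zero p_pos by (simp add: field_simps)
  moreover have "0 < 1 / real p" "1 / real p < 1" using p_ge2 by auto
  ultimately show False by (metis of_int_0_less_iff of_int_less_1_iff not_less zero_less_one_class.zero_le_one less_le_not_le order_less_le_trans int_one_le_iff_zero_less of_int_1_le_iff) 
qed

lemma Psi_shiftp: "Psi p absval (a + 1 / of_nat p) = zeta * Psi p absval a"
proof -
  obtain r where r: "isfrac a r" using frac_exists by blast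
  obtain k where k: "r * of_nat p ^ k \<in> \<int>" using r unfolding isfrac_def by blast
  define e :: rat where "e = (if r + 1 / of_nat p \<ge> 1 then 1 else 0)"
  define r' where "r' = r + 1 / of_nat p - e"
  have pr: "(of_nat p :: rat) > 1" using p_ge2 by simp
  have ip: "0 < 1 / (of_nat p :: rat)" "1 / (of_nat p :: rat) < 1" using pr by auto
  have r01: "0 \<le> r" "r < 1" using r unfolding isfrac_def by auto
  have "0 \<le> r' \<and> r' < 1"
  proof (cases "r + 1 / of_nat p \<ge> 1")
    case True
    then have "r' = r + 1 / of_nat p - 1" unfolding r'_def e_def by simp
    then show ?thesis using True ip r01 by linarith
  next
    case False
    then have "r' = r + 1 / of_nat p" unfolding r'_def e_def by simp
    then show ?thesis using False ip r01 by linarith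
  qed
  then have "0 \<le> r'" "r' < 1" by auto
  have "r' * of_nat p ^ Suc k = (r * of_nat p ^ k) * of_nat p + of_nat p ^ k - e * of_nat p ^ Suc k"
    unfolding r'_def using pr by (simp add: field_simps)
  also have "\<dots> \<in> \<int>"
  proof -
    have "(r * of_nat p ^ k) * of_nat p \<in> \<int>" by (rule Ints_mult[OF k]) simp
    moreover have "e * of_nat p ^ Suc k \<in> \<int>" unfolding e_def by simp
    ultimately show ?thesis by (intro Ints_diff Ints_add) simp_all
  qed
  finally have K: "r' * of_nat p ^ Suc k \<in> \<int>" .
  have "a + 1 / of_nat p - of_rat r' = (a - of_rat r) + of_rat e"
    unfolding r'_def by (simp add: of_rat_diff of_rat_add of_rat_divide)
  moreover have "absval (of_rat e :: 'k) \<le> 1" unfolding e_def by simp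
  ultimately have A: "absval (a + 1 / of_nat p - of_rat r') \<le> 1"
    using r unfolding isfrac_def by (metis av_add_le)
  have "isfrac (a + 1 / of_nat p) r'" unfolding isfrac_def using \<open>0 \<le> r'\<close> \<open>r' < 1\<close> K A by blast
  then have "Psi p absval (a + 1 / of_nat p) = ex r'" by (rule Psi_eq)
  also have "ex r' = zeta * ex r"
  proof -
    have "r + 1 / of_nat p = r' + e" unfolding r'_def by simp
    then have "ex r * zeta = ex r' * ex e" unfolding zeta_def by (metis ex_add)
    moreover have "ex e = 1" unfolding e_def using ex_1 by (simp add: ex_def)
    ultimately show ?thesis by (simp add: mult.commute)
  qed
  finally show ?thesis using Psi_eq[OF r] by simp
qed

end



context qp begin

lemma pnorm_ge: "absval (x i) \<le> pnorm absval (x :: 'n::finite \<Rightarrow> 'k)"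
  unfolding pnorm_def by (rule Max_ge) auto

lemma pnorm_attained: "\<exists>i. absval (x i) = pnorm absval (x :: 'n::finite \<Rightarrow> 'k)"
proof -
  have "pnorm absval x \<in> range (\<lambda>i. absval (x i))" unfolding pnorm_def by (rule Max_in) auto
  then show ?thesis by auto
qed

lemma pnorm_le_iff: "pnorm absval (x :: 'n::finite \<Rightarrow> 'k) \<le> R \<longleftrightarrow> (\<forall>i. absval (x i) \<le> R)"
  unfolding pnorm_def by (subst Max_le_iff) auto

lemma pnorm_nonneg: "pnorm absval (x :: 'n::finite \<Rightarrow> 'k) \<ge> 0"
  using pnorm_ge[of x] av_nonneg order_trans by blast

lemma pnorm_pos: "(x :: 'n::finite \<Rightarrow> 'k) \<noteq> (\<lambda>_. 0) \<Longrightarrow> pnorm absval x > 0"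
proof -
  assume "x \<noteq> (\<lambda>_. 0)"
  then obtain i where "x i \<noteq> 0" by auto
  then have "absval (x i) > 0" using av_nonneg[of "x i"] av_zero_iff[of "x i"] by linarith
  then show ?thesis using pnorm_ge[of x i] by linarith
qed

lemma pow_diff_bound:
  assumes R: "R > 0" and a: "absval a \<le> R" and b: "absval b \<le> R" and ab: "absval (a - b) \<le> \<delta>"
  shows "R * absval (a ^ m - b ^ m) \<le> \<delta> * R ^ m"
proof (induction m)
  case 0 then show ?case using order_trans[OF av_nonneg ab] by simp
next
  case (Suc m)
  have e: "a ^ Suc m - b ^ Suc m = a * (a ^ m - b ^ m) + (a - b) * b ^ m" by (simp add: algebra_simps)
  have d0: "\<delta> \<ge> 0" using ab av_nonneg order_trans by blast
  have t1: "R * absval (a * (a ^ m - b ^ m)) \<le> \<delta> * R ^ Suc m"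
  proof -
    have "R * absval (a * (a ^ m - b ^ m)) = absval a * (R * absval (a ^ m - b ^ m))" by (simp add: av_mult)
    also have "\<dots> \<le> R * (\<delta> * R ^ m)" 
      apply (rule mult_mono) using Suc a d0 R by auto
    finally show ?thesis by (simp add: algebra_simps)
  qed
  have t2: "R * absval ((a - b) * b ^ m) \<le> \<delta> * R ^ Suc m"
  proof -
    have "R * absval ((a - b) * b ^ m) = R * (absval (a - b) * absval b ^ m)" by (simp add: av_mult av_power)
    also have "\<dots> \<le> R * (\<delta> * R ^ m)" using ab b R d0
      by (intro mult_left_mono mult_mono power_mono) auto
    finally show ?thesis by (simp add: algebra_simps)
  qed
  have "absval (a * (a ^ m - b ^ m) + (a - b) * b ^ m) \<le> \<delta> * R ^ Suc m / R"
    using t1 t2 R by (intro av_add_le) (simp_all add: field_simps)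
  then show ?case unfolding e using R by (simp add: field_simps)
qed

lemma prod_diff_bound:
  assumes R: "R > 0" and "finite S"
    and u: "\<And>j. j \<in> S \<Longrightarrow> absval (u j) \<le> R ^ m j"
    and v: "\<And>j. j \<in> S \<Longrightarrow> absval (v j) \<le> R ^ m j"
    and uv: "\<And>j. j \<in> S \<Longrightarrow> R * absval (u j - v j) \<le> \<delta> * R ^ m j"
    and d0: "\<delta> \<ge> 0"
  shows "R * absval (prod u S - prod v S) \<le> \<delta> * R ^ sum m S"
  using assms(2) u v uv
proof (induction S rule: finite_induct)
  case empty then show ?case using d0 by simp
next
  case (insert j S)
  let ?U = "prod u S" and ?V = "prod v S"
  have e: "prod u (insert j S) - prod v (insert j S) = u j * (?U - ?V) + (u j - v j) * ?V"
    using insert by (simp add: algebra_simps)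
  have IH: "R * absval (?U - ?V) \<le> \<delta> * R ^ sum m S" using insert by auto
  have Vb: "absval ?V \<le> R ^ sum m S"
    unfolding av_prod power_sum using insert R by (intro prod_mono) auto
  have t1: "R * absval (u j * (?U - ?V)) \<le> \<delta> * R ^ (m j + sum m S)"
  proof -
    have "R * absval (u j * (?U - ?V)) = absval (u j) * (R * absval (?U - ?V))" by (simp add: av_mult)
    also have "\<dots> \<le> R ^ m j * (\<delta> * R ^ sum m S)" 
      apply (rule mult_mono) using insert IH d0 R by auto
    finally show ?thesis by (simp add: power_add algebra_simps)
  qed
  have t2: "R * absval ((u j - v j) * ?V) \<le> \<delta> * R ^ (m j + sum m S)"
  proof -
    have "R * absval ((u j - v j) * ?V) = (R * absval (u j - v j)) * absval ?V" by (simp add: av_mult)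
    also have "\<dots> \<le> (\<delta> * R ^ m j) * R ^ sum m S" 
      apply (rule mult_mono) using insert Vb d0 R by auto
    finally show ?thesis by (simp add: power_add algebra_simps)
  qed
  have "absval (u j * (?U - ?V) + (u j - v j) * ?V) \<le> \<delta> * R ^ (m j + sum m S) / R"
    using t1 t2 R by (intro av_add_le) (simp_all add: field_simps)
  then show ?case unfolding e using R insert by (simp add: field_simps)
qed

end

locale qpoly = qp p absval for p :: nat and absval :: "'k::field_char_0 \<Rightarrow> real" +
  fixes d :: nat and c :: "('n::finite \<Rightarrow> nat) \<Rightarrow> 'k" and M :: nat
  assumes coeffs: "\<forall>\<alpha>. absval (c \<alpha>) \<le> 1"
    and Mbound: "\<forall>\<xi>. (\<forall>i. absval (\<xi> i) \<le> 1) \<and> (\<exists>i. absval (\<xi> i) = 1)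
                  \<longrightarrow> absval (hpoly d c \<xi>) \<ge> real p powr (- real M)"
begin

abbreviation f :: "('n \<Rightarrow> 'k) \<Rightarrow> 'k" where "f \<equiv> hpoly d c"

lemma f_diff:
  assumes R: "R > 0" and d0: "0 \<le> \<delta>" "\<delta> \<le> R"
    and xi: "\<And>i. absval (\<xi> i) \<le> R" and zx: "\<And>i. absval (\<zeta> i - \<xi> i) \<le> \<delta>"
  shows "R * absval (f \<zeta> - f \<xi>) \<le> \<delta> * R ^ d"
proof -
  have zb: "absval (\<zeta> i) \<le> R" for i
  proof -
    have "\<zeta> i = (\<zeta> i - \<xi> i) + \<xi> i" by simp
    then show ?thesis using av_add_le[of "\<zeta> i - \<xi> i" R "\<xi> i"] zx[of i] xi[of i] d0 by simp
  qed
  have tm: "R * absval (c \<alpha> * ((\<Prod>i\<in>UNIV. \<zeta> i ^ \<alpha> i) - (\<Prod>i\<in>UNIV. \<xi> i ^ \<alpha> i))) \<le> \<delta> * R ^ d"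
    if "sum \<alpha> UNIV = d" for \<alpha>
  proof -
    have "R * absval ((\<Prod>i\<in>UNIV. \<zeta> i ^ \<alpha> i) - (\<Prod>i\<in>UNIV. \<xi> i ^ \<alpha> i)) \<le> \<delta> * R ^ sum \<alpha> UNIV"
    proof (rule prod_diff_bound[OF R])
      show "absval (\<zeta> j ^ \<alpha> j) \<le> R ^ \<alpha> j" for j
        unfolding av_power using zb by (intro power_mono) auto
      show "absval (\<xi> j ^ \<alpha> j) \<le> R ^ \<alpha> j" for j
        unfolding av_power using xi by (intro power_mono) auto
      show "R * absval (\<zeta> j ^ \<alpha> j - \<xi> j ^ \<alpha> j) \<le> \<delta> * R ^ \<alpha> j" for j
        using pow_diff_bound[OF R zb xi zx] .
    qed (use d0 in auto)
    moreover have "absval (c \<alpha>) \<le> 1" using coeffs by auto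
    ultimately show ?thesis using that R
      by (simp add: av_mult) (smt (verit) av_nonneg mult_left_le_one_le mult.left_commute mult_nonneg_nonneg)
  qed
  have "f \<zeta> - f \<xi> = (\<Sum>\<alpha>\<in>{\<alpha>. sum \<alpha> UNIV = d}. c \<alpha> * ((\<Prod>i\<in>UNIV. \<zeta> i ^ \<alpha> i) - (\<Prod>i\<in>UNIV. \<xi> i ^ \<alpha> i)))"
    unfolding hpoly_def by (simp add: sum_subtractf algebra_simps)
  also have "absval \<dots> \<le> \<delta> * R ^ d / R"
    using tm R d0 by (intro av_sum_le) (simp_all add: field_simps)
  finally show ?thesis using R by (simp add: field_simps)
qed

lemma f_homog: "f (\<lambda>i. s * u i) = s ^ d * f u"
proof -
  have "(\<Prod>i\<in>UNIV. (s * u i) ^ \<alpha> i) = s ^ d * (\<Prod>i\<in>UNIV. u i ^ \<alpha> i)" if "sum \<alpha> UNIV = d" for \<alpha>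
    using that by (simp add: power_mult_distrib prod.distrib power_sum[symmetric])
  then show ?thesis unfolding hpoly_def by (simp add: sum_distrib_left algebra_simps)
qed

lemma f_upper: "absval (f \<xi>) \<le> pnorm absval \<xi> ^ d"
proof -
  let ?N = "pnorm absval \<xi>"
  have "absval (c \<alpha> * (\<Prod>i\<in>UNIV. \<xi> i ^ \<alpha> i)) \<le> ?N ^ d" if "sum \<alpha> UNIV = d" for \<alpha>
  proof -
    have "absval (\<Prod>i\<in>UNIV. \<xi> i ^ \<alpha> i) \<le> (\<Prod>i\<in>UNIV. ?N ^ \<alpha> i)"
      unfolding av_prod av_power using pnorm_ge by (intro prod_mono conjI power_mono) auto
    also have "\<dots> = ?N ^ d" using that by (simp add: power_sum[symmetric])
    finally have "absval (\<Prod>i\<in>UNIV. \<xi> i ^ \<alpha> i) \<le> ?N ^ d" .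
    moreover have "absval (c \<alpha>) \<le> 1" using coeffs by auto
    ultimately show ?thesis unfolding av_mult
      by (meson av_nonneg mult_left_le_one_le order_trans mult_right_le_one_le)
  qed
  then show ?thesis unfolding hpoly_def
    by (intro av_sum_le) (auto simp: pnorm_nonneg zero_le_power)
qed

lemma f_lower:
  assumes "\<xi> \<noteq> (\<lambda>_. 0)"
  shows "absval (f \<xi>) \<ge> real p powr (- real M) * pnorm absval \<xi> ^ d"
proof -
  let ?N = "pnorm absval \<xi>"
  have N: "?N > 0" using pnorm_pos[OF assms] .
  obtain i0 where i0: "absval (\<xi> i0) = ?N" using pnorm_attained by blast
  have nz: "\<xi> i0 \<noteq> 0" using i0 N by auto
  define u where "u = (\<lambda>i. \<xi> i / \<xi> i0)"
  have "absval (u i) \<le> 1" for i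
  proof -
    have "absval (\<xi> i) \<le> ?N" by (rule pnorm_ge)
    then show ?thesis unfolding u_def av_divide i0 using N by simp
  qed
  moreover have "absval (u i0) = 1" unfolding u_def using nz by simp
  ultimately have "(\<forall>i. absval (u i) \<le> 1) \<and> (\<exists>i. absval (u i) = 1)" by blast
  then have fu: "absval (f u) \<ge> real p powr (- real M)" using Mbound by blast
  have "\<xi> = (\<lambda>i. \<xi> i0 * u i)" unfolding u_def using nz by auto
  then have "f \<xi> = \<xi> i0 ^ d * f u" using f_homog by metis
  then have "absval (f \<xi>) = ?N ^ d * absval (f u)" by (simp add: av_mult av_power i0)
  then show ?thesis using fu N by (simp add: mult.commute mult_left_mono)
qed

end



locale qph = qp p absval for p :: nat and absval :: "'k::field_char_0 \<Rightarrow> real" +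
  fixes \<mu> :: "('n::finite \<Rightarrow> 'k) measure"
  assumes haar: "is_padic_haar absval \<mu>"
begin

lemmas H = haar[unfolded is_padic_haar_def]
lemma space_mu[simp]: "space \<mu> = UNIV" using H by (rule conjunct1)
lemma sets_mu: "sets \<mu> = sigma_sets UNIV {pball absval a r | a r. r > 0}"
  using H[THEN conjunct2] by (rule conjunct1)
lemma transl_inv: "A \<in> sets \<mu> \<Longrightarrow> emeasure \<mu> ((\<lambda>\<xi>. (\<lambda>i. a i + \<xi> i)) ` A) = emeasure \<mu> A"
  using H[THEN conjunct2, THEN conjunct2, THEN conjunct1] by blast
lemma unit_ball: "emeasure \<mu> (pball absval (\<lambda>_. 0) 1) = 1"
  using H[THEN conjunct2, THEN conjunct2, THEN conjunct2] .

lemma pball_sets[measurable]: "r > 0 \<Longrightarrow> pball absval a r \<in> sets \<mu>"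
  unfolding sets_mu by (rule sigma_sets.Basic) blast

lemma open_sets:
  assumes U: "\<And>\<xi>. \<xi> \<in> U \<Longrightarrow> \<exists>r>0. pball absval \<xi> r \<subseteq> U"
  shows "U \<in> sets \<mu>"
proof -
  define B where "B = (\<lambda>(q :: 'n \<Rightarrow> rat, k :: nat). pball absval (\<lambda>i. of_rat (q i)) ((1 / real p) ^ k))"
  define X where "X = {qk. B qk \<subseteq> U}"
  have "U = (\<Union>qk\<in>X. B qk)"
  proof
    show "(\<Union>qk\<in>X. B qk) \<subseteq> U" unfolding X_def by auto
    show "U \<subseteq> (\<Union>qk\<in>X. B qk)"
    proof
      fix \<xi> assume "\<xi> \<in> U"
      then obtain r where r: "r > 0" "pball absval \<xi> r \<subseteq> U" using U by blast
      have lt1: "1 / real p < 1" using p_ge2 by simp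
      obtain k where k: "(1 / real p) ^ k < r" using real_arch_pow_inv[OF r(1) lt1] by blast
      have pk: "(1 / real p) ^ k > 0" using p_pos by simp
      have "\<forall>i. \<exists>q. absval (\<xi> i - of_rat q) < (1 / real p) ^ k" using dense[OF pk] by blast
      then obtain q where q: "\<And>i. absval (\<xi> i - of_rat (q i)) < (1 / real p) ^ k" by metis
      have "B (q, k) \<subseteq> pball absval \<xi> r"
      proof
        fix \<zeta> assume "\<zeta> \<in> B (q, k)"
        then have z: "absval (\<zeta> i - of_rat (q i)) \<le> (1 / real p) ^ k" for i
          unfolding B_def pball_def by auto
        have "absval (\<zeta> i - \<xi> i) \<le> (1 / real p) ^ k" for i
        proof -
          have "\<zeta> i - \<xi> i = (\<zeta> i - of_rat (q i)) + (-(\<xi> i - of_rat (q i)))" by simp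
          moreover have "absval (-(\<xi> i - of_rat (q i))) \<le> (1 / real p) ^ k"
            using q[of i] av_minus[of "\<xi> i - of_rat (q i)"] by linarith
          ultimately show ?thesis using av_add_le[OF z[of i], of "-(\<xi> i - of_rat (q i))"] by simp
        qed
        then show "\<zeta> \<in> pball absval \<xi> r" unfolding pball_def using k by (auto intro: order_trans less_imp_le)
      qed
      then have "(q, k) \<in> X" unfolding X_def using r by blast
      moreover have "\<xi> \<in> B (q, k)" unfolding B_def pball_def
        using q by (auto simp: av_diff_sym[of "\<xi> _"] less_imp_le)
      ultimately show "\<xi> \<in> (\<Union>qk\<in>X. B qk)" by blast
    qed
  qed
  also have "\<dots> \<in> sets \<mu>"
    using p_pos by (intro sets.countable_UN) (auto simp: B_def intro!: pball_sets)
  finally show ?thesis .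
qed

lemma zero_set: "{(\<lambda>_. 0) :: 'n \<Rightarrow> 'k} \<in> sets \<mu>"
proof -
  have "UNIV - {(\<lambda>_. 0) :: 'n \<Rightarrow> 'k} \<in> sets \<mu>"
  proof (rule open_sets)
    fix \<xi> :: "'n \<Rightarrow> 'k" assume "\<xi> \<in> UNIV - {\<lambda>_. 0}"
    then have N: "pnorm absval \<xi> > 0" using pnorm_pos by auto
    obtain i0 where i0: "absval (\<xi> i0) = pnorm absval \<xi>" using pnorm_attained by blast
    have "pball absval \<xi> (pnorm absval \<xi> / 2) \<subseteq> UNIV - {\<lambda>_. 0}"
    proof
      fix \<zeta> assume z: "\<zeta> \<in> pball absval \<xi> (pnorm absval \<xi> / 2)"
      have "\<zeta> \<noteq> (\<lambda>_. 0)"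
      proof
        assume "\<zeta> = (\<lambda>_. 0)"
        then have "absval (\<xi> i0) \<le> pnorm absval \<xi> / 2" using z unfolding pball_def by auto
        then show False using i0 N by linarith
      qed
      then show "\<zeta> \<in> UNIV - {\<lambda>_. 0}" by simp
    qed
    then show "\<exists>r>0. pball absval \<xi> r \<subseteq> UNIV - {\<lambda>_. 0}" using N by (intro exI[of _ "pnorm absval \<xi> / 2"]) auto
  qed
  then have "UNIV - (UNIV - {(\<lambda>_. 0) :: 'n \<Rightarrow> 'k}) \<in> sets \<mu>"
    using sets.compl_sets[of _ \<mu>] by (metis space_mu)
  moreover have "UNIV - (UNIV - {(\<lambda>_. 0) :: 'n \<Rightarrow> 'k}) = {\<lambda>_. 0}" by blast
  ultimately show ?thesis by simp
qed

lemma loc_const_measurable: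
  fixes \<phi> :: "('n \<Rightarrow> 'k) \<Rightarrow> 'b::topological_space"
  assumes lc: "\<And>\<xi>. \<xi> \<noteq> (\<lambda>_. 0) \<Longrightarrow> \<exists>r>0. \<forall>\<zeta>\<in>pball absval \<xi> r. \<phi> \<zeta> = \<phi> \<xi>"
  shows "\<phi> \<in> borel_measurable \<mu>"
proof (rule measurableI)
  fix A :: "'b set"
  let ?V = "\<phi> -` A"
  have "?V - {\<lambda>_. 0} \<in> sets \<mu>"
  proof (rule open_sets)
    fix \<xi> assume \<xi>: "\<xi> \<in> ?V - {\<lambda>_. 0}"
    then obtain r where r: "r > 0" "\<forall>\<zeta>\<in>pball absval \<xi> r. \<phi> \<zeta> = \<phi> \<xi>" using lc by blast
    have N: "pnorm absval \<xi> > 0" using pnorm_pos \<xi> by auto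
    obtain i0 where i0: "absval (\<xi> i0) = pnorm absval \<xi>" using pnorm_attained by blast
    define r' where "r' = min r (pnorm absval \<xi> / 2)"
    have "pball absval \<xi> r' \<subseteq> ?V - {\<lambda>_. 0}"
    proof
      fix \<zeta> assume z: "\<zeta> \<in> pball absval \<xi> r'"
      then have "\<zeta> \<in> pball absval \<xi> r" unfolding pball_def r'_def by auto
      then have "\<phi> \<zeta> = \<phi> \<xi>" using r by blast
      moreover have "\<zeta> \<noteq> (\<lambda>_. 0)"
      proof
        assume "\<zeta> = (\<lambda>_. 0)"
        then have "absval (\<xi> i0) \<le> pnorm absval \<xi> / 2" using z unfolding pball_def r'_def by auto
        then show False using i0 N by linarith
      qed
      ultimately show "\<zeta> \<in> ?V - {\<lambda>_. 0}" using \<xi> by auto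
    qed
    moreover have "r' > 0" unfolding r'_def using r N by auto
    ultimately show "\<exists>r>0. pball absval \<xi> r \<subseteq> ?V - {\<lambda>_. 0}" by blast
  qed
  moreover have "?V \<inter> {\<lambda>_. 0} \<in> sets \<mu>"
  proof (cases "(\<lambda>_. 0) \<in> ?V")
    case True then have "?V \<inter> {\<lambda>_. 0} = {\<lambda>_. 0}" by auto
    then show ?thesis using zero_set by simp
  next
    case False then have "?V \<inter> {\<lambda>_. 0} = {}" by auto
    then show ?thesis by simp
  qed
  ultimately have "(?V - {\<lambda>_. 0}) \<union> (?V \<inter> {\<lambda>_. 0}) \<in> sets \<mu>" by blast
  moreover have "(?V - {\<lambda>_. 0}) \<union> (?V \<inter> {\<lambda>_. 0}) = ?V \<inter> space \<mu>" by auto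
  ultimately show "?V \<inter> space \<mu> \<in> sets \<mu>" by simp
qed simp

definition tr :: "('n \<Rightarrow> 'k) \<Rightarrow> ('n \<Rightarrow> 'k) \<Rightarrow> ('n \<Rightarrow> 'k)" where
  "tr a \<xi> = (\<lambda>i. a i + \<xi> i)"

lemma tr_measurable: "tr a \<in> measurable \<mu> \<mu>"
proof (rule measurable_sigma_sets[OF sets_mu])
  show "{pball absval a r | a r. r > 0} \<subseteq> Pow UNIV" by auto
  show "tr a \<in> space \<mu> \<rightarrow> UNIV" by auto
  fix y :: "('n \<Rightarrow> 'k) set" assume "y \<in> {pball absval a r | a r. r > 0}"
  then obtain b r where y: "y = pball absval b r" "r > 0" by blast
  have "tr a -` y \<inter> space \<mu> = pball absval (\<lambda>i. b i - a i) r"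
    unfolding y pball_def tr_def by (auto simp: algebra_simps)
  then show "tr a -` y \<inter> space \<mu> \<in> sets \<mu>" using y by (simp add: pball_sets)
qed

lemma distr_tr: "distr \<mu> \<mu> (tr a) = \<mu>"
proof (rule measure_eqI)
  show "sets (distr \<mu> \<mu> (tr a)) = sets \<mu>" by simp
  fix A assume "A \<in> sets (distr \<mu> \<mu> (tr a))"
  then have A: "A \<in> sets \<mu>" by simp
  have "tr a -` A \<inter> space \<mu> = (\<lambda>\<xi>. (\<lambda>i. (- a i) + \<xi> i)) ` A"
  proof -
    have "tr a -` A = (\<lambda>\<xi>. (\<lambda>i. (- a i) + \<xi> i)) ` A"
    proof
      show "tr a -` A \<subseteq> (\<lambda>\<xi>. (\<lambda>i. (- a i) + \<xi> i)) ` A"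
      proof
        fix \<xi> assume "\<xi> \<in> tr a -` A"
        then have "tr a \<xi> \<in> A" by simp
        moreover have "\<xi> = (\<lambda>i. (- a i) + tr a \<xi> i)" unfolding tr_def by auto
        ultimately show "\<xi> \<in> (\<lambda>\<xi>. (\<lambda>i. (- a i) + \<xi> i)) ` A" by blast
      qed
      show "(\<lambda>\<xi>. (\<lambda>i. (- a i) + \<xi> i)) ` A \<subseteq> tr a -` A"
        unfolding tr_def by (auto simp: o_def)
    qed
    then show ?thesis by simp
  qed
  moreover have "emeasure \<mu> ((\<lambda>\<xi>. (\<lambda>i. (- a i) + \<xi> i)) ` A) = emeasure \<mu> A"
    by (rule transl_inv[OF A])
  ultimately show "emeasure (distr \<mu> \<mu> (tr a)) A = emeasure \<mu> A"
    using A by (simp add: emeasure_distr[OF tr_measurable])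
qed

lemma integral_tr:
  fixes h :: "('n \<Rightarrow> 'k) \<Rightarrow> complex"
  assumes "h \<in> borel_measurable \<mu>"
  shows "integral\<^sup>L \<mu> (\<lambda>\<xi>. h (tr a \<xi>)) = integral\<^sup>L \<mu> h"
  using integral_distr[OF tr_measurable assms, of a] distr_tr by simp

lemma emeasure_ball_tr: "r > 0 \<Longrightarrow> emeasure \<mu> (pball absval a r) = emeasure \<mu> (pball absval (\<lambda>_. 0) r)"
proof -
  assume r: "r > 0"
  have "pball absval a r = (\<lambda>\<xi>. (\<lambda>i. a i + \<xi> i)) ` pball absval (\<lambda>_. 0) r"
  proof
    show "pball absval a r \<subseteq> (\<lambda>\<xi>. (\<lambda>i. a i + \<xi> i)) ` pball absval (\<lambda>_. 0) r"
    proof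
      fix \<xi> assume "\<xi> \<in> pball absval a r"
      then have "(\<lambda>i. \<xi> i - a i) \<in> pball absval (\<lambda>_. 0) r" unfolding pball_def by auto
      moreover have "\<xi> = (\<lambda>i. a i + (\<xi> i - a i))" by auto
      ultimately show "\<xi> \<in> (\<lambda>\<xi>. (\<lambda>i. a i + \<xi> i)) ` pball absval (\<lambda>_. 0) r"
        by (intro image_eqI[where x="\<lambda>i. \<xi> i - a i"]) auto
    qed
    show "(\<lambda>\<xi>. (\<lambda>i. a i + \<xi> i)) ` pball absval (\<lambda>_. 0) r \<subseteq> pball absval a r"
      unfolding pball_def by auto
  qed
  then show ?thesis using transl_inv[OF pball_sets[OF r]] by simp
qed

end



context qp begin

lemma int_approx:
  assumes b: "absval b \<le> 1"
  shows "\<exists>r::int. 0 \<le> r \<and> r < int p ^ K \<and> absval (b - of_int r) \<le> (1 / real p) ^ K"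
proof -
  have pk: "(1 / real p) ^ K > 0" using p_pos by simp
  obtain q where q: "absval (b - of_rat q) < (1 / real p) ^ K" using dense[OF pk] by blast
  have pk1: "(1 / real p) ^ K \<le> 1" using p_ge2 by (simp add: power_le_one)
  have "of_rat q = b + (-(b - of_rat q))" by simp
  then have qb: "absval (of_rat q :: 'k) \<le> 1"
    using av_add_le[OF b, of "-(b - of_rat q)"] q pk1 av_minus[of "b - of_rat q"] by simp
  obtain s D where sD: "quotient_of q = (s, D)" by (cases "quotient_of q") auto
  have Dpos: "D > 0" using quotient_of_denom_pos[OF sD] .
  have qsD: "q = of_int s / of_int D" using quotient_of_div[OF sD] .
  have cop: "coprime s D" using quotient_of_coprime[OF sD] .
  have ndvd: "\<not> int p dvd D"
  proof
    assume pD: "int p dvd D"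
    have "\<not> int p dvd s"
    proof
      assume "int p dvd s"
      then have "is_unit (int p)" using coprime_common_divisor[OF cop _ pD] by blast
      then show False using p_ge2 by simp
    qed
    then have as: "absval (of_int s :: 'k) = 1" by (rule av_unit)
    have aD: "absval (of_int D :: 'k) \<le> 1 / real p" using dvd_val[of 1 D] pD by simp
    have "(of_int D :: 'k) \<noteq> 0" using Dpos by simp
    then have aD0: "absval (of_int D :: 'k) > 0"
      using av_nonneg[of "of_int D :: 'k"] av_zero_iff[of "of_int D :: 'k"] by linarith
    have "absval (of_rat q :: 'k) = 1 / absval (of_int D :: 'k)"
      unfolding qsD by (simp add: of_rat_divide av_divide as)
    also have "\<dots> \<ge> real p" using aD aD0 p_pos by (simp add: field_simps)
    finally show False using qb p_ge2 by simp
  qed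
  have aD: "absval (of_int D :: 'k) = 1" using av_unit[OF ndvd] .
  have "coprime (int p) D" using ndvd prime_p by (simp add: prime_imp_coprime)
  then have "coprime D (int p ^ K)" by (simp add: ac_simps)
  then obtain u v where uv: "u * D + v * int p ^ K = 1"
    using bezout_int[of D "int p ^ K"] by (auto simp: coprime_iff_gcd_eq_1)
  define r where "r = (s * u) mod (int p ^ K)"
  have ppos: "int p ^ K > 0" using p_ge2 by simp
  have r0: "0 \<le> r" "r < int p ^ K" unfolding r_def using ppos by auto
  define P where "P = int p ^ K"
  have rdef: "r = s * u - (s * u) div P * P" unfolding r_def P_def by (simp add: minus_div_mult_eq_mod)
  have uv': "1 - u * D = v * P" using uv unfolding P_def by linarith
  have "s - r * D = s * (1 - u * D) + (s * u) div P * P * D" unfolding rdef by (simp add: algebra_simps)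
  also have "\<dots> = P * (s * v + (s * u) div P * D)" unfolding uv' by (simp add: algebra_simps)
  finally have "int p ^ K dvd (s - r * D)" unfolding P_def by simp
  then have e1: "absval (of_int (s - r * D) :: 'k) \<le> (1 / real p) ^ K" by (rule dvd_val)
  have Dnz: "(of_int D :: 'k) \<noteq> 0" using Dpos by simp
  have "(of_rat q :: 'k) - of_int r = of_int (s - r * D) / of_int D"
    unfolding qsD using Dnz by (simp add: of_rat_divide field_simps)
  then have e2: "absval ((of_rat q :: 'k) - of_int r) \<le> (1 / real p) ^ K"
    using e1 by (simp add: av_divide aD)
  have "b - of_int r = (b - of_rat q) + (of_rat q - of_int r)" by simp
  then have "absval (b - of_int r) \<le> (1 / real p) ^ K"
    using av_add_le[of "b - of_rat q" "(1 / real p) ^ K" "of_rat q - of_int r"] q e2 by simp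
  then show ?thesis using r0 by blast
qed

end

context qph begin

abbreviation ball0 :: "real \<Rightarrow> ('n \<Rightarrow> 'k) set" where "ball0 r \<equiv> pball absval (\<lambda>_. 0) r"

definition Rset :: "nat \<Rightarrow> ('n \<Rightarrow> int) set" where
  "Rset K = Pi\<^sub>E UNIV (\<lambda>_. {0..<int p ^ K})"

lemma Rset_finite: "finite (Rset K)"
  unfolding Rset_def by (rule finite_PiE) auto

lemma Rset_card: "card (Rset K) = p ^ (K * CARD('n))"
proof -
  have "nat (int p ^ K) = p ^ K" by (metis nat_int of_nat_power)
  then show ?thesis unfolding Rset_def by (simp add: card_PiE power_mult)
qed

lemma unit_ball_any: "emeasure \<mu> (pball absval a 1) = 1"
  using emeasure_ball_tr[of 1 a] unit_ball by simp

lemma covering: "emeasure \<mu> (ball0 (real p ^ K)) \<le> of_nat (p ^ (K * CARD('n)))"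
proof -
  define F where "F = (\<lambda>r :: 'n \<Rightarrow> int. pball absval (\<lambda>i. of_int (r i) / of_nat p ^ K) 1)"
  have pnz: "(of_nat p ^ K :: 'k) \<noteq> 0" using p_ge2 by simp
  have avpk: "absval (of_nat p ^ K :: 'k) = (1 / real p) ^ K" by (rule av_pp)
  have pk: "(1 / real p) ^ K > 0" using p_pos by simp
  have sub: "ball0 (real p ^ K) \<subseteq> (\<Union>r\<in>Rset K. F r)"
  proof
    fix \<xi> assume "\<xi> \<in> ball0 (real p ^ K)"
    then have xb: "absval (\<xi> i) \<le> real p ^ K" for i unfolding pball_def by auto
    have "\<exists>r. 0 \<le> r \<and> r < int p ^ K \<and> absval (of_nat p ^ K * \<xi> i - of_int r) \<le> (1 / real p) ^ K" for i
    proof (rule int_approx)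
      have "absval (of_nat p ^ K * \<xi> i) = (1 / real p) ^ K * absval (\<xi> i)" by (simp add: av_mult avpk)
      also have "\<dots> \<le> (1 / real p) ^ K * real p ^ K" using xb[of i] pk by (intro mult_left_mono) auto
      also have "\<dots> = 1" using p_pos by (simp add: power_divide)
      finally show "absval (of_nat p ^ K * \<xi> i) \<le> 1" .
    qed
    then obtain r where r: "\<And>i. 0 \<le> r i \<and> r i < int p ^ K \<and> absval (of_nat p ^ K * \<xi> i - of_int (r i)) \<le> (1 / real p) ^ K"
      by metis
    have "r \<in> Rset K" unfolding Rset_def PiE_UNIV_domain using r by auto
    moreover have "\<xi> \<in> F r" unfolding F_def pball_def
    proof (intro CollectI allI)
      fix i
      have "\<xi> i - of_int (r i) / of_nat p ^ K = (of_nat p ^ K * \<xi> i - of_int (r i)) / of_nat p ^ K"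
        using pnz by (simp add: field_simps)
      then have "absval (\<xi> i - of_int (r i) / of_nat p ^ K) = absval (of_nat p ^ K * \<xi> i - of_int (r i)) / (1 / real p) ^ K"
        by (simp add: av_divide avpk)
      also have "\<dots> \<le> 1" using r[of i] pk by (simp add: divide_le_eq)
      finally show "absval (\<xi> i - of_int (r i) / of_nat p ^ K) \<le> 1" .
    qed
    ultimately show "\<xi> \<in> (\<Union>r\<in>Rset K. F r)" by blast
  qed
  have Fs: "F ` Rset K \<subseteq> sets \<mu>" unfolding F_def by (auto intro!: pball_sets)
  have "emeasure \<mu> (ball0 (real p ^ K)) \<le> emeasure \<mu> (\<Union>r\<in>Rset K. F r)"
    by (rule emeasure_mono[OF sub]) (use Fs Rset_finite in auto)
  also have "\<dots> \<le> (\<Sum>r\<in>Rset K. emeasure \<mu> (F r))"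
    by (rule emeasure_subadditive_finite[OF Rset_finite Fs])
  also have "\<dots> = (\<Sum>r\<in>Rset K. 1)" unfolding F_def by (simp add: unit_ball_any)
  also have "\<dots> = of_nat (p ^ (K * CARD('n)))" using Rset_card by simp
  finally show ?thesis .
qed

lemma packing: "of_nat (p ^ (K * CARD('n))) * emeasure \<mu> (ball0 ((1 / real p) ^ K)) \<le> 1"
proof -
  define F where "F = (\<lambda>r :: 'n \<Rightarrow> int. pball absval (\<lambda>i. of_int (r i)) ((1 / real p) ^ K))"
  have pk: "(1 / real p) ^ K > 0" using p_pos by simp
  have pk1: "(1 / real p) ^ K \<le> 1" using p_ge2 by (simp add: power_le_one)
  have Fs: "F ` Rset K \<subseteq> sets \<mu>" unfolding F_def using pk by (auto intro!: pball_sets)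
  have disj: "disjoint_family_on F (Rset K)"
    unfolding disjoint_family_on_def
  proof (intro ballI impI)
    fix r r' assume rr: "r \<in> Rset K" "r' \<in> Rset K" "r \<noteq> r'"
    then obtain i where i: "r i \<noteq> r' i" by auto
    show "F r \<inter> F r' = {}"
    proof (rule ccontr)
      assume "F r \<inter> F r' \<noteq> {}"
      then obtain \<zeta> where "\<zeta> \<in> F r" "\<zeta> \<in> F r'" by blast
      then have a: "absval (\<zeta> i - of_int (r i)) \<le> (1 / real p) ^ K" "absval (\<zeta> i - of_int (r' i)) \<le> (1 / real p) ^ K"
        unfolding F_def pball_def by auto
      have "(of_int (r i - r' i) :: 'k) = (\<zeta> i - of_int (r' i)) - (\<zeta> i - of_int (r i))" by simp
      then have "absval (of_int (r i - r' i) :: 'k) \<le> (1 / real p) ^ K"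
        using av_diff_le[OF a(2) a(1)] by simp
      then have dv: "int p ^ K dvd (r i - r' i)" by (rule val_dvd)
      have "r i - r' i \<noteq> 0" using i by simp
      from dvd_imp_le_int[OF this dv] have "\<bar>int p ^ K\<bar> \<le> \<bar>r i - r' i\<bar>" .
      moreover have "0 \<le> r i" "r i < int p ^ K" "0 \<le> r' i" "r' i < int p ^ K"
        using rr unfolding Rset_def PiE_UNIV_domain by auto
      ultimately show False by auto
    qed
  qed
  have sub: "(\<Union>r\<in>Rset K. F r) \<subseteq> ball0 1"
  proof
    fix \<zeta> assume "\<zeta> \<in> (\<Union>r\<in>Rset K. F r)"
    then obtain r where "\<zeta> \<in> F r" by blast
    then have a: "absval (\<zeta> i - of_int (r i)) \<le> 1" for i unfolding F_def pball_def using pk1 by (auto intro: order_trans)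
    have "absval (\<zeta> i) \<le> 1" for i
    proof -
      have "\<zeta> i = (\<zeta> i - of_int (r i)) + of_int (r i)" by simp
      then show ?thesis using av_add_le[OF a[of i] av_int_le1[of "r i"]] by simp
    qed
    then show "\<zeta> \<in> ball0 1" unfolding pball_def by simp
  qed
  have "(\<Sum>r\<in>Rset K. emeasure \<mu> (F r)) = emeasure \<mu> (\<Union>r\<in>Rset K. F r)"
    by (rule sum_emeasure[OF Fs disj Rset_finite])
  also have "\<dots> \<le> emeasure \<mu> (ball0 1)" by (rule emeasure_mono[OF sub]) (simp add: pball_sets)
  also have "\<dots> = 1" by (rule unit_ball)
  finally have "(\<Sum>r\<in>Rset K. emeasure \<mu> (F r)) \<le> 1" .
  moreover have eq: "emeasure \<mu> (F r) = emeasure \<mu> (ball0 ((1 / real p) ^ K))" for r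
    unfolding F_def using emeasure_ball_tr[OF pk] by simp
  have "(\<Sum>r\<in>Rset K. emeasure \<mu> (F r)) = (\<Sum>r\<in>Rset K. emeasure \<mu> (ball0 ((1 / real p) ^ K)))"
    by (rule sum.cong) (simp_all only: eq)
  also have "\<dots> = of_nat (card (Rset K)) * emeasure \<mu> (ball0 ((1 / real p) ^ K))"
    by (rule sum_constant)
  finally show ?thesis using \<open>(\<Sum>r\<in>Rset K. emeasure \<mu> (F r)) \<le> 1\<close> by (simp only: Rset_card)
qed

end



context qph begin

lemma ball_mono: "r \<le> r' \<Longrightarrow> ball0 r \<subseteq> ball0 r'"
  unfolding pball_def by (auto intro: order_trans)

lemma ball_bound:
  assumes rho: "\<rho> > 0"
  shows "emeasure \<mu> (ball0 \<rho>) \<le> ennreal ((real p * \<rho>) ^ CARD('n))"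
proof (cases "\<rho> \<ge> 1")
  case True
  have p1: "1 < real p" using p_ge2 by simp
  have ex: "\<exists>K. \<rho> \<le> real p ^ K" using real_arch_pow[OF p1, of \<rho>] by (auto intro: less_imp_le)
  define K where "K = (LEAST K. \<rho> \<le> real p ^ K)"
  have K1: "\<rho> \<le> real p ^ K" unfolding K_def by (rule LeastI_ex[OF ex])
  have K2: "real p ^ K \<le> real p * \<rho>"
  proof (cases K)
    case 0 then show ?thesis using True p1 mult_mono[of 1 "real p" 1 \<rho>] by simp
  next
    case (Suc K')
    then have "K' < K" by simp
    then have "\<not> \<rho> \<le> real p ^ K'" unfolding K_def by (rule not_less_Least)
    then show ?thesis using Suc p_pos by simp
  qed
  have "emeasure \<mu> (ball0 \<rho>) \<le> emeasure \<mu> (ball0 (real p ^ K))"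
    by (rule emeasure_mono[OF ball_mono[OF K1]]) (rule pball_sets, use p_ge2 in simp)
  also have "\<dots> \<le> of_nat (p ^ (K * CARD('n)))" by (rule covering)
  also have "(of_nat (p ^ (K * CARD('n))) :: ennreal) = ennreal ((real p ^ K) ^ CARD('n))"
    by (simp add: power_mult ennreal_of_nat_eq_real_of_nat)
  also have "\<dots> \<le> ennreal ((real p * \<rho>) ^ CARD('n))"
    using K2 p_pos by (intro ennreal_leI power_mono) auto
  finally show ?thesis .
next
  case False
  have lt1: "1 / real p < 1" using p_ge2 by simp
  have ex: "\<exists>j. (1 / real p) ^ j < \<rho>" using real_arch_pow_inv[OF rho lt1] .
  define j where "j = (LEAST j. (1 / real p) ^ j < \<rho>)"
  have j1: "(1 / real p) ^ j < \<rho>" unfolding j_def by (rule LeastI_ex[OF ex])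
  have "j \<noteq> 0" proof assume "j = 0" then show False using j1 False by simp qed
  then obtain K where K: "j = Suc K" using not0_implies_Suc by blast
  have "K < j" using K by simp
  then have K1: "\<rho> \<le> (1 / real p) ^ K" unfolding j_def using not_less_Least by force
  have K2: "(1 / real p) ^ K \<le> real p * \<rho>"
  proof -
    have "(1 / real p) ^ K = real p * (1 / real p) ^ j" unfolding K using p_pos by simp
    then show ?thesis using j1 p_pos by simp
  qed
  have pk: "(1 / real p) ^ K > 0" using p_pos by simp
  define m where "m = emeasure \<mu> (ball0 ((1 / real p) ^ K))"
  have pack: "of_nat (p ^ (K * CARD('n))) * m \<le> 1" unfolding m_def by (rule packing)
  have Npos: "p ^ (K * CARD('n)) > 0" using p_ge2 by simp
  have "m \<noteq> \<infinity>"
  proof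
    assume "m = \<infinity>"
    then have "of_nat (p ^ (K * CARD('n))) * m = \<infinity>" using Npos by (simp add: ennreal_mult_top)
    then have "(\<infinity>::ennreal) \<le> 1" using pack by simp
    then show False by (simp add: top_unique)
  qed
  then obtain x where x: "m = ennreal x" "x \<ge> 0" by (cases m rule: ennreal_cases) auto
  have "ennreal (real (p ^ (K * CARD('n))) * x) \<le> 1"
    using pack x by (simp add: ennreal_mult ennreal_of_nat_eq_real_of_nat)
  then have "real (p ^ (K * CARD('n))) * x \<le> 1" by (simp add: ennreal_le_1)
  then have "x \<le> 1 / real (p ^ (K * CARD('n)))" using Npos by (simp add: field_simps)
  also have "\<dots> = ((1 / real p) ^ K) ^ CARD('n)" by (simp add: power_mult power_divide)
  also have "\<dots> \<le> (real p * \<rho>) ^ CARD('n)" using K2 pk by (intro power_mono) auto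
  finally have xb: "x \<le> (real p * \<rho>) ^ CARD('n)" .
  have "emeasure \<mu> (ball0 \<rho>) \<le> m"
    unfolding m_def by (rule emeasure_mono[OF ball_mono[OF K1]]) (simp add: pball_sets pk)
  also have "\<dots> \<le> ennreal ((real p * \<rho>) ^ CARD('n))" using x xb by (simp add: ennreal_leI)
  finally show ?thesis .
qed

lemma ball_finite: "\<rho> > 0 \<Longrightarrow> emeasure \<mu> (ball0 \<rho>) < \<infinity>"
  using ball_bound[of \<rho>] by (simp add: le_less_trans)

lemma ball_measure: "\<rho> > 0 \<Longrightarrow> measure \<mu> (ball0 \<rho>) \<le> (real p * \<rho>) ^ CARD('n)"
proof -
  assume r: "\<rho> > 0"
  have "emeasure \<mu> (ball0 \<rho>) \<noteq> top" using ball_finite[OF r] by simp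
  then have e: "emeasure \<mu> (ball0 \<rho>) = ennreal (measure \<mu> (ball0 \<rho>))"
    by (rule emeasure_eq_ennreal_measure)
  have "ennreal (measure \<mu> (ball0 \<rho>)) \<le> ennreal ((real p * \<rho>) ^ CARD('n))"
    using ball_bound[OF r] unfolding e .
  then show ?thesis using r p_pos by (simp add: ennreal_le_iff)
qed

end



locale qall = qpoly p absval d c M + qph p absval \<mu>
  for p :: nat and absval :: "'k::field_char_0 \<Rightarrow> real" and d :: nat
    and c :: "('n::finite \<Rightarrow> nat) \<Rightarrow> 'k" and M :: nat and \<mu> :: "('n \<Rightarrow> 'k) measure"
begin

lemma pM_pos: "real p powr (- real M) > 0" using p_pos by simp
lemma pM_le1: "real p powr (- real M) \<le> 1"
proof -
  have "real p powr (- real M) = 1 / real p ^ M" using p_pos by (simp add: powr_minus_divide powr_realpow)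
  moreover have "1 \<le> real p ^ M" using p_ge2 by (simp add: one_le_power)
  ultimately show ?thesis by (simp add: divide_le_eq)
qed

lemma f_stable:
  assumes xi: "\<xi> \<noteq> (\<lambda>_. 0)" and zx: "\<And>i. absval (\<zeta> i - \<xi> i) \<le> \<delta>"
    and d0: "0 \<le> \<delta>" "\<delta> \<le> pnorm absval \<xi>"
    and lt: "\<delta> < real p powr (- real M) * pnorm absval \<xi>"
  shows "absval (f \<zeta>) = absval (f \<xi>)"
proof -
  define R where "R = pnorm absval \<xi>"
  have R: "R > 0" unfolding R_def using pnorm_pos[OF xi] .
  have "R * absval (f \<zeta> - f \<xi>) \<le> \<delta> * R ^ d"
    by (rule f_diff[OF R d0[unfolded R_def[symmetric]] _ zx]) (simp add: R_def pnorm_ge)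
  also have "\<dots> < (real p powr (- real M) * R) * R ^ d"
    using lt R by (intro mult_strict_right_mono) (auto simp: R_def)
  also have "\<dots> = R * (real p powr (- real M) * R ^ d)" by (simp add: algebra_simps)
  also have "\<dots> \<le> R * absval (f \<xi>)" using f_lower[OF xi] R by (intro mult_left_mono) (auto simp: R_def)
  finally have "absval (f \<zeta> - f \<xi>) < absval (f \<xi>)" using R by simp
  then have "absval (f \<xi> + (f \<zeta> - f \<xi>)) = absval (f \<xi>)" by (rule av_strict)
  then show ?thesis by simp
qed

lemma final_arith:
  fixes t N \<beta> :: real
  assumes N: "N > 0" and t: "t \<ge> 0"
  defines "\<rho> \<equiv> real p ^ (M + 1) / N"
  shows "
     (real p * \<rho>) ^ CARD('n) * (t * \<rho> powr (real d * \<beta>))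
     = (real p ^ CARD('n) * real p powr ((real M + 1) * (real d * \<beta> + real CARD('n)))) * t
       * N powr (- real d * \<beta> - real CARD('n))"
proof -
  have rho: "\<rho> > 0" unfolding \<rho>_def using N p_pos by simp
  let ?a = "real d * \<beta> + real CARD('n)"
  have e1: "(real p * \<rho>) ^ CARD('n) * (t * \<rho> powr (real d * \<beta>)) = real p ^ CARD('n) * t * (\<rho> powr real CARD('n) * \<rho> powr (real d * \<beta>))"
    using rho by (simp add: power_mult_distrib powr_realpow algebra_simps)
  have e1': "\<rho> powr real CARD('n) * \<rho> powr (real d * \<beta>) = \<rho> powr ?a"
    by (simp add: powr_add algebra_simps)
  have e2: "\<rho> powr ?a = (real p ^ (M + 1)) powr ?a * (1 / N powr ?a)"
    unfolding \<rho>_def using N p_pos by (simp add: powr_divide)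
  have e3: "(real p ^ (M + 1)) powr ?a = real p powr ((real M + 1) * ?a)"
  proof -
    have "real p ^ (M + 1) = real p powr real (M + 1)" using p_pos by (rule powr_realpow[symmetric])
    then show ?thesis by (simp add: powr_powr add.commute)
  qed
  have e4: "1 / N powr ?a = N powr (- real d * \<beta> - real CARD('n))"
  proof -
    have "- real d * \<beta> - real CARD('n) = - ?a" by simp
    then show ?thesis by (simp only: powr_minus_divide)
  qed
  show ?thesis by (simp only: e1 e1' e2 e3 e4) (simp add: ac_simps)
qed

end



context qall begin

lemma main_bound:
  assumes beta: "\<beta> > 0" and x: "x \<noteq> (\<lambda>_. 0)" and t: "t > 0"
  shows "cmod (Zkernel p absval \<mu> (hpoly d c) \<beta> x t)
    \<le> (real p ^ CARD('n) * real p powr ((real M + 1) * (real d * \<beta> + real CARD('n)))) * t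
       * pnorm absval x powr (- real d * \<beta> - real CARD('n))"
proof -
  define N where "N = pnorm absval x"
  have N: "N > 0" unfolding N_def using pnorm_pos[OF x] .
  obtain i0 where i0: "absval (x i0) = N" unfolding N_def using pnorm_attained by blast
  have xi0: "x i0 \<noteq> 0" using i0 N by auto
  define \<rho> where "\<rho> = real p ^ (M + 1) / N"
  have rho: "\<rho> > 0" unfolding \<rho>_def using N p_pos by simp
  define B where "B = ball0 \<rho>"
  have Bs: "B \<in> sets \<mu>" unfolding B_def using rho by (rule pball_sets)
  have Bfin: "emeasure \<mu> B < \<infinity>" unfolding B_def using ball_finite[OF rho] .
  have Bmeas: "measure \<mu> B \<le> (real p * \<rho>) ^ CARD('n)" unfolding B_def using ball_measure[OF rho] .
  define \<eta> where "\<eta> = (\<lambda>i. if i = i0 then 1 / (of_nat p * x i0) else (0 :: 'k))"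
  have pnz: "(of_nat p :: 'k) \<noteq> 0" using p_ge2 by simp
  have eta_abs: "absval (\<eta> i) \<le> real p / N" for i
  proof (cases "i = i0")
    case True
    then have "absval (\<eta> i) = 1 / ((1 / real p) * N)" unfolding \<eta>_def by (simp add: av_divide av_mult av_p i0)
    also have "\<dots> = real p / N" by simp
    finally show ?thesis by simp
  next
    case False then show ?thesis unfolding \<eta>_def using N p_pos by simp
  qed
  have pN_rho: "real p / N \<le> \<rho>"
  proof -
    have "real p ^ 1 \<le> real p ^ (M + 1)" using p_ge2 by (intro power_increasing) auto
    then show ?thesis unfolding \<rho>_def using N by (simp add: divide_right_mono)
  qed
  have pN_eq: "real p / N = real p powr (- real M) * \<rho>"
  proof -
    have "real p powr (- real M) * real p ^ (M + 1) = real p"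
      using p_pos by (simp add: powr_minus_divide powr_realpow)
    then show ?thesis unfolding \<rho>_def by (metis times_divide_eq_right)
  qed
  have xeta: "(\<Sum>i\<in>UNIV. x i * \<eta> i) = 1 / of_nat p"
  proof -
    have "(\<Sum>i\<in>UNIV. x i * \<eta> i) = (\<Sum>i\<in>UNIV. if i = i0 then x i0 * (1 / (of_nat p * x i0)) else 0)"
      by (rule sum.cong) (auto simp: \<eta>_def)
    also have "\<dots> = x i0 * (1 / (of_nat p * x i0))" by simp
    also have "\<dots> = 1 / of_nat p" using xi0 pnz by (simp add: field_simps)
    finally show ?thesis .
  qed
  define \<Psi>x where "\<Psi>x = (\<lambda>\<xi>. Psi p absval (\<Sum>i\<in>UNIV. x i * \<xi> i))"
  define g where "g = (\<lambda>\<xi>. complex_of_real (exp (- t * absval (f \<xi>) powr \<beta>)))"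
  define F where "F = (\<lambda>\<xi>. \<Psi>x \<xi> * g \<xi>)"
  have Z: "Zkernel p absval \<mu> (hpoly d c) \<beta> x t = integral\<^sup>L \<mu> F"
    unfolding Zkernel_def F_def \<Psi>x_def g_def by simp
  have Psi_tr: "\<Psi>x (tr \<eta> \<xi>) = zeta * \<Psi>x \<xi>" for \<xi>
  proof -
    have "(\<Sum>i\<in>UNIV. x i * tr \<eta> \<xi> i) = (\<Sum>i\<in>UNIV. x i * \<xi> i) + (\<Sum>i\<in>UNIV. x i * \<eta> i)"
      unfolding tr_def by (simp add: distrib_left sum.distrib add.commute)
    then show ?thesis unfolding \<Psi>x_def xeta by (simp add: Psi_shiftp)
  qed
  have Psi_lc: "\<Psi>x \<zeta> = \<Psi>x \<xi>" if "\<zeta> \<in> pball absval \<xi> (1 / N)" for \<xi> \<zeta>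
  proof -
    have z: "absval (\<zeta> i - \<xi> i) \<le> 1 / N" for i using that unfolding pball_def by auto
    have "(\<Sum>i\<in>UNIV. x i * \<zeta> i) = (\<Sum>i\<in>UNIV. x i * \<xi> i) + (\<Sum>i\<in>UNIV. x i * (\<zeta> i - \<xi> i))"
      by (simp add: algebra_simps sum.distrib[symmetric])
    moreover have "absval (\<Sum>i\<in>UNIV. x i * (\<zeta> i - \<xi> i)) \<le> 1"
    proof (rule av_sum_le)
      fix i
      have "absval (x i) * absval (\<zeta> i - \<xi> i) \<le> N * (1 / N)"
        using z[of i] pnorm_ge[of x i] N unfolding N_def by (intro mult_mono) auto
      then show "absval (x i * (\<zeta> i - \<xi> i)) \<le> 1" using N by (simp add: av_mult)
    qed simp
    ultimately show ?thesis unfolding \<Psi>x_def by (simp add: Psi_shift1)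
  qed
  have Psi_meas[measurable]: "\<Psi>x \<in> borel_measurable \<mu>"
    by (rule loc_const_measurable) (use N Psi_lc in \<open>auto intro!: exI[of _ "1 / N"]\<close>)
  have g_lc: "\<exists>r>0. \<forall>\<zeta>\<in>pball absval \<xi> r. g \<zeta> = g \<xi>" if xi: "\<xi> \<noteq> (\<lambda>_. 0)" for \<xi>
  proof -
    define r where "r = real p powr (- real M) * pnorm absval \<xi> / 2"
    have Nx: "pnorm absval \<xi> > 0" using pnorm_pos[OF xi] .
    have r0: "r > 0" unfolding r_def using Nx pM_pos by simp
    have "\<forall>\<zeta>\<in>pball absval \<xi> r. g \<zeta> = g \<xi>"
    proof
      fix \<zeta> assume "\<zeta> \<in> pball absval \<xi> r"
      then have z: "absval (\<zeta> i - \<xi> i) \<le> r" for i unfolding pball_def by auto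
      have "real p powr (- real M) * pnorm absval \<xi> \<le> 1 * pnorm absval \<xi>"
        by (rule mult_right_mono[OF pM_le1]) (simp add: pnorm_nonneg)
      then have "r \<le> pnorm absval \<xi>" unfolding r_def using Nx by linarith
      moreover have "r < real p powr (- real M) * pnorm absval \<xi>" unfolding r_def using Nx pM_pos by simp
      ultimately have "absval (f \<zeta>) = absval (f \<xi>)" using f_stable[OF xi z] r0 by simp
      then show "g \<zeta> = g \<xi>" unfolding g_def by simp
    qed
    then show ?thesis using r0 by blast
  qed
  have g_meas[measurable]: "g \<in> borel_measurable \<mu>"
    by (rule loc_const_measurable) (rule g_lc)
  have F_meas[measurable]: "F \<in> borel_measurable \<mu>" unfolding F_def by measurable
  have memB: "tr \<eta> \<xi> \<in> B \<longleftrightarrow> \<xi> \<in> B" for \<xi>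
  proof
    assume "tr \<eta> \<xi> \<in> B"
    then have a: "absval (\<eta> i + \<xi> i) \<le> \<rho>" for i unfolding B_def pball_def tr_def by auto
    have "absval (\<xi> i) \<le> \<rho>" for i
    proof -
      have "\<xi> i = (\<eta> i + \<xi> i) - \<eta> i" by simp
      then show ?thesis using av_diff_le[OF a[of i], of "\<eta> i"] eta_abs[of i] pN_rho by simp
    qed
    then show "\<xi> \<in> B" unfolding B_def pball_def by simp
  next
    assume "\<xi> \<in> B"
    then have a: "absval (\<xi> i) \<le> \<rho>" for i unfolding B_def pball_def by auto
    have "absval (\<eta> i + \<xi> i) \<le> \<rho>" for i
      using av_add_le[OF _ a[of i], of "\<eta> i"] eta_abs[of i] pN_rho by simp
    then show "tr \<eta> \<xi> \<in> B" unfolding B_def pball_def tr_def by simp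
  qed
  have g_tr: "g (tr \<eta> \<xi>) = g \<xi>" if nB: "\<xi> \<notin> B" for \<xi>
  proof -
    obtain j where j: "absval (\<xi> j) > \<rho>" using nB unfolding B_def pball_def by (auto simp: not_le)
    have xi: "\<xi> \<noteq> (\<lambda>_. 0)" using j rho by auto
    have Nxi: "pnorm absval \<xi> > \<rho>" using j pnorm_ge[of \<xi> j] by linarith
    have "absval (tr \<eta> \<xi> i - \<xi> i) \<le> real p / N" for i unfolding tr_def using eta_abs by simp
    moreover have "0 \<le> real p / N" using N by simp
    moreover have "real p / N \<le> pnorm absval \<xi>" using pN_rho Nxi by linarith
    moreover have "real p / N < real p powr (- real M) * pnorm absval \<xi>"
      unfolding pN_eq using Nxi pM_pos by simp
    ultimately have "absval (f (tr \<eta> \<xi>)) = absval (f \<xi>)" using f_stable[OF xi] by blast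
    then show ?thesis unfolding g_def by simp
  qed
  show ?thesis
  proof (cases "integrable \<mu> F")
    case False
    then have "Zkernel p absval \<mu> (hpoly d c) \<beta> x t = 0" unfolding Z by (rule not_integrable_integral_eq)
    moreover have "0 \<le> (real p ^ CARD('n) * real p powr ((real M + 1) * (real d * \<beta> + real CARD('n)))) * t
       * pnorm absval x powr (- real d * \<beta> - real CARD('n))" using t by simp
    ultimately show ?thesis by simp
  next
    case True
    define h1 where "h1 = (\<lambda>\<xi>. indicator (UNIV - B) \<xi> *\<^sub>R F \<xi>)"
    define h2 where "h2 = (\<lambda>\<xi>. indicator B \<xi> *\<^sub>R \<Psi>x \<xi>)"
    define h3 where "h3 = (\<lambda>\<xi>. indicator B \<xi> *\<^sub>R (F \<xi> - \<Psi>x \<xi>))"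
    have Bcs: "UNIV - B \<in> sets \<mu>" using Bs by (metis sets.compl_sets space_mu)
    have h1m[measurable]: "h1 \<in> borel_measurable \<mu>" unfolding h1_def using Bcs by measurable
    have h2m[measurable]: "h2 \<in> borel_measurable \<mu>" unfolding h2_def using Bs by measurable
    have h3m[measurable]: "h3 \<in> borel_measurable \<mu>" unfolding h3_def using Bs by measurable
    have int1: "integrable \<mu> h1" unfolding h1_def by (rule integrable_mult_indicator[OF Bcs True])
    have intB: "integrable \<mu> (indicator B :: _ \<Rightarrow> real)" using Bs Bfin by (rule integrable_real_indicator)
    have int2: "integrable \<mu> h2"
    proof (rule Bochner_Integration.integrable_bound[OF intB h2m])
      show "AE \<xi> in \<mu>. norm (h2 \<xi>) \<le> norm (indicator B \<xi> :: real)"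
        unfolding h2_def \<Psi>x_def by (intro AE_I2) (simp add: norm_Psi)
    qed
    have h3eq: "h3 = (\<lambda>\<xi>. indicator B \<xi> *\<^sub>R F \<xi> - h2 \<xi>)"
      unfolding h3_def h2_def by (simp add: fun_eq_iff scaleR_diff_right)
    have int3: "integrable \<mu> h3" unfolding h3eq
      by (rule Bochner_Integration.integrable_diff[OF integrable_mult_indicator[OF Bs True] int2])
    have Fsplit: "F = (\<lambda>\<xi>. h1 \<xi> + h2 \<xi> + h3 \<xi>)"
      unfolding h1_def h2_def h3_def by (auto simp: fun_eq_iff indicator_def)
    have "integral\<^sup>L \<mu> F = integral\<^sup>L \<mu> (\<lambda>\<xi>. h1 \<xi> + h2 \<xi>) + integral\<^sup>L \<mu> h3"
      unfolding Fsplit by (rule Bochner_Integration.integral_add) (use int1 int2 int3 in auto)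
    also have "integral\<^sup>L \<mu> (\<lambda>\<xi>. h1 \<xi> + h2 \<xi>) = integral\<^sup>L \<mu> h1 + integral\<^sup>L \<mu> h2"
      by (rule Bochner_Integration.integral_add[OF int1 int2])
    finally have Fint: "integral\<^sup>L \<mu> F = integral\<^sup>L \<mu> h1 + integral\<^sup>L \<mu> h2 + integral\<^sup>L \<mu> h3" .
    have zero_if: "integral\<^sup>L \<mu> h = 0" if hm: "h \<in> borel_measurable \<mu>" and ht: "\<And>\<xi>. h (tr \<eta> \<xi>) = zeta * h \<xi>"
      for h :: "('n \<Rightarrow> 'k) \<Rightarrow> complex"
    proof -
      have "integral\<^sup>L \<mu> h = integral\<^sup>L \<mu> (\<lambda>\<xi>. h (tr \<eta> \<xi>))" using integral_tr[OF hm] by simp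
      also have "\<dots> = zeta * integral\<^sup>L \<mu> h" by (simp add: ht)
      finally have "(1 - zeta) * integral\<^sup>L \<mu> h = 0" by (simp add: algebra_simps)
      then show ?thesis using zeta_ne1 by simp
    qed
    have I1: "integral\<^sup>L \<mu> h1 = 0"
    proof (rule zero_if[OF h1m])
      fix \<xi>
      show "h1 (tr \<eta> \<xi>) = zeta * h1 \<xi>"
      proof (cases "\<xi> \<in> B")
        case True then show ?thesis unfolding h1_def using memB by simp
      next
        case False
        then have "tr \<eta> \<xi> \<notin> B" using memB by simp
        then show ?thesis unfolding h1_def F_def using False Psi_tr g_tr[OF False] by simp
      qed
    qed
    have I2: "integral\<^sup>L \<mu> h2 = 0"
    proof (rule zero_if[OF h2m])
      fix \<xi>
      show "h2 (tr \<eta> \<xi>) = zeta * h2 \<xi>"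
        unfolding h2_def using memB Psi_tr by (simp add: indicator_def)
    qed
    define K where "K = t * \<rho> powr (real d * \<beta>)"
    have K0: "K \<ge> 0" unfolding K_def using t by simp
    have h3b: "norm (h3 \<xi>) \<le> indicator B \<xi> * K" for \<xi>
    proof (cases "\<xi> \<in> B")
      case False then show ?thesis unfolding h3_def by simp
    next
      case True
      define s where "s = t * absval (f \<xi>) powr \<beta>"
      have s0: "s \<ge> 0" unfolding s_def using t by simp
      have "norm (F \<xi> - \<Psi>x \<xi>) = norm (\<Psi>x \<xi> * (g \<xi> - 1))" unfolding F_def by (simp add: algebra_simps)
      also have "\<dots> = norm (g \<xi> - 1)" unfolding \<Psi>x_def by (simp add: norm_mult norm_Psi)
      also have "g \<xi> - 1 = complex_of_real (exp (- s) - 1)" unfolding g_def s_def by simp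
      also have "norm (complex_of_real (exp (- s) - 1)) = \<bar>exp (- s) - 1\<bar>" by (rule norm_of_real)
      also have "\<dots> = 1 - exp (- s)"
      proof -
        have "exp (- s) \<le> 1" using s0 by simp
        then show ?thesis by simp
      qed
      also have "\<dots> \<le> s" using exp_ge_add_one_self[of "- s"] by linarith
      also have "s \<le> K"
      proof -
        have "absval (f \<xi>) \<le> pnorm absval \<xi> ^ d" by (rule f_upper)
        also have "pnorm absval \<xi> \<le> \<rho>" using True unfolding B_def pball_def by (simp add: pnorm_le_iff)
        then have "pnorm absval \<xi> ^ d \<le> \<rho> ^ d" using pnorm_nonneg by (intro power_mono) auto
        finally have "absval (f \<xi>) powr \<beta> \<le> (\<rho> ^ d) powr \<beta>" using beta by (intro powr_mono2) auto
        also have "(\<rho> ^ d) powr \<beta> = \<rho> powr (real d * \<beta>)"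
          using rho by (simp add: powr_realpow[symmetric] powr_powr)
        finally show ?thesis unfolding s_def K_def using t by (intro mult_left_mono) auto
      qed
      finally show ?thesis unfolding h3_def using True by simp
    qed
    have "norm (integral\<^sup>L \<mu> h3) \<le> integral\<^sup>L \<mu> (\<lambda>\<xi>. norm (h3 \<xi>))" by (rule Bochner_Integration.integral_norm_bound)
    also have "\<dots> \<le> integral\<^sup>L \<mu> (\<lambda>\<xi>. indicator B \<xi> * K)"
      by (rule Bochner_Integration.integral_mono) (use int3 intB h3b in auto)
    also have "\<dots> = measure \<mu> B * K" by simp
    also have "\<dots> \<le> (real p * \<rho>) ^ CARD('n) * K" using Bmeas K0 by (rule mult_right_mono)
    also have "\<dots> = (real p ^ CARD('n) * real p powr ((real M + 1) * (real d * \<beta> + real CARD('n)))) * t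
       * pnorm absval x powr (- real d * \<beta> - real CARD('n))"
      unfolding K_def \<rho>_def N_def using final_arith[OF N[unfolded N_def], of t \<beta>] t by simp
    finally show ?thesis unfolding Z Fint I1 I2 by simp
  qed
qed

end

theorem proposition1:
  fixes p :: nat and absval :: "'k::field_char_0 \<Rightarrow> real"
    and \<mu> :: "('n::finite \<Rightarrow> 'k) measure"
    and d :: nat and c :: "('n \<Rightarrow> nat) \<Rightarrow> 'k"
    and \<beta> :: real and M :: nat
  assumes Qp: "is_Qp p absval"
    and haar: "is_padic_haar absval \<mu>"
    and beta: "\<beta> > 0"
    and coeffs_Zp: "\<forall>\<alpha>. absval (c \<alpha>) \<le> 1"
    and nonconst: "d \<ge> 1" "\<exists>\<alpha>. sum \<alpha> UNIV = d \<and> c \<alpha> \<noteq> 0"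
    and elliptic: "\<forall>\<xi>. hpoly d c \<xi> = 0 \<longleftrightarrow> \<xi> = (\<lambda>_. 0)"
    and Mpos: "M > 0"
    and Mbound: "\<forall>\<xi>. (\<forall>i. absval (\<xi> i) \<le> 1) \<and> (\<exists>i. absval (\<xi> i) = 1)
                  \<longrightarrow> absval (hpoly d c \<xi>) \<ge> real p powr (- real M)"
  shows "\<exists>C>0. \<forall>x t. x \<noteq> (\<lambda>_. 0) \<and> t > 0 \<and>
           real p powr ((real M + 1) * real d * \<beta>) * t * pnorm absval x powr (- real d * \<beta>) \<le> 1
           \<longrightarrow> cmod (Zkernel p absval \<mu> (hpoly d c) \<beta> x t)
                 \<le> C * t * pnorm absval x powr (- real d * \<beta> - real CARD('n))"
proof -
  interpret qall p absval d c M \<mu>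
    by unfold_locales (rule Qp | rule coeffs_Zp | rule Mbound | rule haar)+
  define C where "C = real p ^ CARD('n) * real p powr ((real M + 1) * (real d * \<beta> + real CARD('n)))"
  have C: "C > 0" unfolding C_def using p_pos by simp
  show ?thesis
  proof (intro exI[of _ C] conjI allI impI)
    show "C > 0" by (rule C)
    fix x :: "'n \<Rightarrow> 'k" and t :: real assume a: "x \<noteq> (\<lambda>_. 0) \<and> t > 0 \<and>
           real p powr ((real M + 1) * real d * \<beta>) * t * pnorm absval x powr (- real d * \<beta>) \<le> 1"
    show "cmod (Zkernel p absval \<mu> (hpoly d c) \<beta> x t)
                 \<le> C * t * pnorm absval x powr (- real d * \<beta> - real CARD('n))"
      unfolding C_def using main_bound[OF beta] a by blast
  qed
qed

end
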